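(* Let $g:\mathbb{R}\to\mathbb{R}$ be a continuous function such that $g(z)=0$ has at most $r\ge1$ distinct real roots. For numbers $x_i,y_j\in[0,1]$, $(i,j)\in[d]^2$, define $\boldsymbol\Theta\in\mathbb{R}^{d\times d}$ by $\boldsymbol\Theta(i,j)=g(\max(x_i,y_j))$. Then $\mathrm{srank}(\boldsymbol\Theta)\le2r$. The same conclusion holds with $\min$ in place of $\max$.
   Context: $\mathrm{sgn}(x)=1$ if $x>0$ and $-1$ otherwise, applied entrywise. Sign rank: $\mathrm{srank}(\boldsymbol\Theta)=\min\{\mathrm{rank}(\boldsymbol\Theta'):\boldsymbol\Theta'\in\mathbb{R}^{d\times d},\ \mathrm{sgn}(\boldsymbol\Theta')=\mathrm{sgn}(\boldsymbol\Theta)\}$. *)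

theory Defs
  imports "HOL-Analysis.Analysis"
begin

text \<open>Paper's sign convention: sgn x = 1 if x > 0, and -1 otherwise (applied entrywise).\<close>
definition psgn :: "real \<Rightarrow> real" where
  "psgn x = (if x > 0 then 1 else -1)"

definition msgn :: "real^'n^'m \<Rightarrow> real^'n^'m" where
  "msgn A = (\<chi> i j. psgn (A $ i $ j))"

definition srank :: "real^'n^'n \<Rightarrow> nat" where
  "srank A = Inf {rank B | B :: real^'n^'n. msgn B = msgn A}"

end

theory Submission
  imports Defs
begin

lemma rank_le_span:
  fixes B :: "real^'n^'m"
  assumes "finite S" "\<And>i. B $ i \<in> span S"
  shows "rank B \<le> card S"
proof -
  have "rows B \<subseteq> span S"
    using assms(2) by (auto simp: rows_def row_def)
  then show ?thesis unfolding row_rank_def using dim_le_card assms(1) by blast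
qed

lemma srank_le:
  fixes A B :: "real^'n^'n"
  assumes "\<And>i j. psgn (B $ i $ j) = psgn (A $ i $ j)"
  shows "srank A \<le> rank B"
proof -
  have "msgn B = msgn A" using assms by (simp add: msgn_def)
  then have "rank B \<in> {rank B | B :: real^'n^'n. msgn B = msgn A}" by blast
  then show ?thesis unfolding srank_def by (meson bdd_below_bot cInf_lower)
qed

definition zc :: "(real \<Rightarrow> real) \<Rightarrow> real set \<Rightarrow> bool" where
  "zc f Z \<longleftrightarrow> (\<forall>a b. a \<le> b \<longrightarrow> (\<forall>t. a \<le> t \<and> t \<le> b \<longrightarrow> t \<notin> Z) \<longrightarrow> f a = f b)"

definition Rw :: "(real \<Rightarrow> real) \<Rightarrow> ('d::finite \<Rightarrow> real) \<Rightarrow> real \<Rightarrow> real^'d" where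
  "Rw f y x = (\<chi> j. f (max x (y j)))"

lemma zc_above:
  assumes "zc f Z" "\<forall>z\<in>Z. z \<le> m" "t > m"
  shows "f t = f (m+1)"
proof -
  have fr: "\<forall>s. min t (m+1) \<le> s \<and> s \<le> max t (m+1) \<longrightarrow> s \<notin> Z"
  proof (intro allI impI)
    fix s assume s: "min t (m+1) \<le> s \<and> s \<le> max t (m+1)"
    have "s > m" using s assms(3) by linarith
    then show "s \<notin> Z" using assms(2) by force
  qed
  have "f (min t (m+1)) = f (max t (m+1))"
    using assms(1)[unfolded zc_def, rule_format, of "min t (m+1)" "max t (m+1)"] fr by simp
  then show ?thesis by (cases "t \<le> m+1") (simp_all add: min_def max_def)
qed

lemma zc_empty:
  assumes "zc f {}"
  shows "f a = f b"
proof (cases "a \<le> b")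
  case True then show ?thesis using assms unfolding zc_def by blast
next
  case False then show ?thesis using assms unfolding zc_def
    by (metis empty_iff nle_le)
qed

lemma avg_aux: "(a::real) < b \<Longrightarrow> (b + a)/2 \<le> t \<Longrightarrow> t \<le> a \<Longrightarrow> False"
  by (simp add: field_simps)

lemma avg_aux2: "(a::real) < b \<Longrightarrow> (b + a)/2 < b"
  by (simp add: field_simps)

lemma split_point:
  fixes Z :: "real set"
  assumes "finite Z" "Z \<noteq> {}"
  obtains c where "c < Max Z" "\<forall>t. c \<le> t \<and> t < Max Z \<longrightarrow> t \<notin> Z"
proof (cases "Z - {Max Z} = {}")
  case True
  have A: "\<forall>t. Max Z - 1 \<le> t \<and> t < Max Z \<longrightarrow> t \<notin> Z"
  proof (intro allI impI notI)
    fix t assume t: "Max Z - 1 \<le> t \<and> t < Max Z" and "t \<in> Z"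
    then have "t \<in> Z - {Max Z}" by auto
    then show False using True by blast
  qed
  have B: "Max Z - 1 < Max Z" by simp
  show ?thesis using that[OF B A] .
next
  case False
  let ?m = "Max Z"
  let ?Z' = "Z - {?m}"
  have fin: "finite ?Z'" using assms by auto
  have M1: "Max ?Z' \<in> ?Z'" by (rule Max_in[OF fin False])
  then have M2: "Max ?Z' \<in> Z" "Max ?Z' \<noteq> ?m" by auto
  have M3: "Max ?Z' \<le> ?m" by (rule Max_ge[OF assms(1) M2(1)])
  have lt: "Max ?Z' < ?m" using M2(2) M3 by linarith
  have A: "\<forall>t. (?m + Max ?Z')/2 \<le> t \<and> t < ?m \<longrightarrow> t \<notin> Z"
  proof (intro allI impI notI)
    fix t assume t: "(?m + Max ?Z')/2 \<le> t \<and> t < ?m" and tZ: "t \<in> Z"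
    then have "t \<in> ?Z'" by auto
    then have "t \<le> Max ?Z'" using fin by simp
    then show False using avg_aux[OF lt] t by blast
  qed
  have B: "(?m + Max ?Z')/2 < ?m" using avg_aux2[OF lt] .
  show ?thesis using that[OF B A] .
qed

lemma split_point2:
  fixes Z :: "real set"
  assumes "finite Z" "Z \<noteq> {}"
  obtains m c where "m \<in> Z" "\<forall>z\<in>Z. z \<le> m" "c < m" "\<forall>t. c \<le> t \<and> t < m \<longrightarrow> t \<notin> Z"
proof -
  obtain c where c: "c < Max Z" "\<forall>t. c \<le> t \<and> t < Max Z \<longrightarrow> t \<notin> Z"
    using split_point[OF assms] by blast
  have "Max Z \<in> Z" by (rule Max_in[OF assms])
  moreover have "\<forall>z\<in>Z. z \<le> Max Z" using Max_ge[OF assms(1)] by blast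
  ultimately show ?thesis using that[OF _ _ c(1) c(2)] by blast
qed

lemma split_facts:
  fixes Z :: "real set"
  assumes "m \<in> Z" "\<forall>z\<in>Z. z \<le> m" "zc f Z" "c < m" "\<forall>t. c \<le> t \<and> t < m \<longrightarrow> t \<notin> Z"
  shows "zc (\<lambda>t. f (min t c)) (Z - {m})"
    and "\<And>t. t < m \<Longrightarrow> f t = f (min t c)"
    and "\<And>t. t > m \<Longrightarrow> f t = f (m + 1)"
proof -
  let ?m = m
  show "zc (\<lambda>t. f (min t c)) (Z - {m})"
    unfolding zc_def
  proof (intro allI impI)
    fix a b :: real
    assume ab: "a \<le> b" and fr: "\<forall>t. a \<le> t \<and> t \<le> b \<longrightarrow> t \<notin> Z - {?m}"
    have "\<forall>t. min a c \<le> t \<and> t \<le> min b c \<longrightarrow> t \<notin> Z"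
    proof (intro allI impI)
      fix t assume t: "min a c \<le> t \<and> t \<le> min b c"
      show "t \<notin> Z"
      proof (cases "a \<le> t")
        case True
        then have "t \<notin> Z - {?m}" using fr t by simp
        moreover have "min b c \<le> c" by simp
        then have "t \<noteq> ?m" using t assms(4) by linarith
        ultimately show ?thesis by auto
      next
        case False
        then have "c \<le> t" using t by (simp add: min_def split: if_splits)
        moreover have "min b c \<le> c" by simp
        then have "t < ?m" using t assms(4) by linarith
        ultimately show ?thesis using assms(5) by blast
      qed
    qed
    moreover have "min a c \<le> min b c" using ab by linarith
    ultimately show "f (min a c) = f (min b c)"
      using assms(3)[unfolded zc_def, rule_format, of "min a c" "min b c"] by blast
  qed
  show "\<And>t. t < m \<Longrightarrow> f t = f (min t c)"
  proof -
    fix t assume t: "t < ?m"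
    show "f t = f (min t c)"
    proof (cases "t \<le> c")
      case True then show ?thesis by simp
    next
      case False
      have "\<forall>s. c \<le> s \<and> s \<le> t \<longrightarrow> s \<notin> Z"
      proof (intro allI impI)
        fix s assume s: "c \<le> s \<and> s \<le> t"
        then have "s < ?m" using t by linarith
        then show "s \<notin> Z" using s assms(5) by blast
      qed
      moreover have "c \<le> t" using False by linarith
      ultimately have "f c = f t" using assms(3)[unfolded zc_def, rule_format, of c t] by blast
      moreover have "min t c = c" using False by simp
      ultimately show ?thesis by simp
    qed
  qed
  show "\<And>t. t > m \<Longrightarrow> f t = f (m + 1)"
  proof -
    fix t :: real assume "t > m"
    then show "f t = f (m + 1)" using zc_above[OF assms(3) assms(2)] by blast
  qed
qed


lemma rows_count:
  fixes y :: "'d::finite \<Rightarrow> real"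
  shows "finite Z \<Longrightarrow> card Z \<le> n \<Longrightarrow> zc f Z \<Longrightarrow>
    finite (range (Rw f y)) \<and> card (range (Rw f y)) \<le> 2*n+1"
proof (induction n arbitrary: f Z)
  case 0
  then have "Z = {}" by auto
  then have "\<And>x. Rw f y x = Rw f y 0" using 0 zc_empty[of f] unfolding Rw_def
    by (auto simp: vec_eq_iff)
  then have "range (Rw f y) = {Rw f y 0}" by auto
  then show ?case by simp
next
  case (Suc n)
  show ?case
  proof (cases "Z = {}")
    case True
    then have "\<And>x. Rw f y x = Rw f y 0" using Suc zc_empty[of f] unfolding Rw_def
      by (auto simp: vec_eq_iff)
    then have "range (Rw f y) = {Rw f y 0}" by auto
    then show ?thesis by simp
  next
    case False
    obtain m c where mZ: "m \<in> Z" and mmax: "\<forall>z\<in>Z. z \<le> m" and c1: "c < m"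
      and c2: "\<forall>t. c \<le> t \<and> t < m \<longrightarrow> t \<notin> Z"
      using split_point2[OF Suc.prems(1) False] by blast
    let ?m = m
    note sf = split_facts[OF mZ mmax Suc.prems(3) c1 c2]
    define f' where "f' = (\<lambda>t. f (min t c))"
    have "card (Z - {?m}) = card Z - 1" by (rule card_Diff_singleton[OF mZ])
    then have "card (Z - {?m}) \<le> n" using Suc.prems(2) by linarith
    then have IH: "finite (range (Rw f' y)) \<and> card (range (Rw f' y)) \<le> 2*n+1"
      using Suc.IH[of "Z - {?m}" f'] Suc.prems(1) sf(1) unfolding f'_def by auto
    define w :: "real^'d" where "w = (\<chi> j. if y j = ?m then f ?m - f c else if y j > ?m then f (?m+1) - f c else 0)"
    have sub: "range (Rw f y) \<subseteq> (\<lambda>u. u + w) ` range (Rw f' y) \<union> {Rw f y ?m, Rw f y (?m+1)}"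
    proof
      fix v assume "v \<in> range (Rw f y)"
      then obtain x where v: "v = Rw f y x" by auto
      consider "x < ?m" | "x = ?m" | "x > ?m" by linarith
      then show "v \<in> (\<lambda>u. u + w) ` range (Rw f' y) \<union> {Rw f y ?m, Rw f y (?m+1)}"
      proof cases
        case 1
        have "Rw f y x = Rw f' y x + w"
        proof (subst vec_eq_iff, intro allI)
          fix j
          consider "y j < ?m" | "y j = ?m" | "y j > ?m" by linarith
          then show "Rw f y x $ j = (Rw f' y x + w) $ j"
          proof cases
            case 1
            then show ?thesis using \<open>x < ?m\<close> sf(2)[of "max x (y j)"] by (simp add: Rw_def w_def f'_def)
          next
            case 2
            then show ?thesis using \<open>x < ?m\<close> c1 by (simp add: Rw_def w_def f'_def)
          next
            case 3
            then show ?thesis using \<open>x < ?m\<close> c1 sf(3)[of "y j"] by (simp add: Rw_def w_def f'_def)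
          qed
        qed
        then show ?thesis using v by auto
      next
        case 2 then show ?thesis using v by auto
      next
        case 3
        have "Rw f y x = Rw f y (?m+1)"
        proof (subst vec_eq_iff, intro allI)
          fix j
          have "max x (y j) > ?m" "max (?m+1) (y j) > ?m" using 3 by auto
          then show "Rw f y x $ j = Rw f y (?m+1) $ j"
            using sf(3)[of "max x (y j)"] sf(3)[of "max (?m+1) (y j)"] by (simp add: Rw_def)
        qed
        then show ?thesis using v by auto
      qed
    qed
    have fin: "finite ((\<lambda>u. u + w) ` range (Rw f' y) \<union> {Rw f y ?m, Rw f y (?m+1)})"
      using IH by auto
    have "card (range (Rw f y)) \<le> card ((\<lambda>u. u + w) ` range (Rw f' y) \<union> {Rw f y ?m, Rw f y (?m+1)})"
      using card_mono[OF fin sub] .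
    also have "\<dots> \<le> card ((\<lambda>u. u + w) ` range (Rw f' y)) + card {Rw f y ?m, Rw f y (?m+1)}"
      by (rule card_Un_le)
    also have "\<dots> \<le> card (range (Rw f' y)) + 2"
    proof -
      have "card ((\<lambda>u. u + w) ` range (Rw f' y)) \<le> card (range (Rw f' y))"
        using IH card_image_le by blast
      moreover have "card {Rw f y ?m, Rw f y (?m+1)} \<le> 2"
        by (cases "Rw f y ?m = Rw f y (?m+1)") simp_all
      ultimately show ?thesis by linarith
    qed
    finally have "card (range (Rw f y)) \<le> 2 * Suc n + 1" using conjunct2[OF IH] by simp
    moreover have "finite (range (Rw f y))" using finite_subset[OF sub fin] .
    ultimately show ?thesis by blast
  qed
qed


lemma zc_psgn:
  fixes g :: "real \<Rightarrow> real"
  assumes "continuous_on UNIV g"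
  shows "zc (\<lambda>t. psgn (g t)) {z. g z = 0}"
  unfolding zc_def
proof (intro allI impI)
  fix a b :: real
  assume ab: "a \<le> b" and fr: "\<forall>t. a \<le> t \<and> t \<le> b \<longrightarrow> t \<notin> {z. g z = 0}"
  have co: "continuous_on {a..b} g" using assms continuous_on_subset by blast
  show "psgn (g a) = psgn (g b)"
  proof (rule ccontr)
    assume ne: "psgn (g a) \<noteq> psgn (g b)"
    have ga: "g a \<noteq> 0" and gb: "g b \<noteq> 0" using fr ab by auto
    have "(g a < 0 \<and> g b > 0) \<or> (g a > 0 \<and> g b < 0)"
      using ne ga gb by (auto simp: psgn_def split: if_splits)
    then obtain t where "a \<le> t \<and> t \<le> b \<and> g t = 0"
      using IVT'[of g a 0 b] IVT2'[of g b 0 a] ab co by force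
    then show False using fr by auto
  qed
qed

lemma main_max:
  fixes g :: "real \<Rightarrow> real" and r :: nat
    and x y :: "'d::finite \<Rightarrow> real"
  assumes cont: "continuous_on UNIV g"
    and r1: "r \<ge> 1"
    and finZ: "finite {z. g z = 0}" and cardZ: "card {z. g z = 0} \<le> r"
  shows "srank ((\<chi> i j. g (max (x i) (y j))) :: real^'d^'d) \<le> 2 * r"
proof -
  define Z where "Z = {z. g z = 0}"
  define f where "f = (\<lambda>t. psgn (g t))"
  have zc: "zc f Z" using zc_psgn[OF cont] unfolding f_def Z_def .
  have fin: "finite Z" using finZ Z_def by simp
  have fv: "\<And>t. f t = 1 \<or> f t = -1" by (simp add: f_def psgn_def)
  have fZ: "\<And>t. t \<in> Z \<Longrightarrow> f t = -1" by (simp add: f_def psgn_def Z_def)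
  have pp: "\<And>t. psgn (f t) = f t" by (simp add: f_def psgn_def)
  define A :: "real^'d^'d" where "A = (\<chi> i j. g (max (x i) (y j)))"
  have pA: "\<And>i j. psgn (A $ i $ j) = f (max (x i) (y j))" by (simp add: A_def f_def)
  have goal: "srank A \<le> 2 * r"
  proof -
    have "\<exists>(B::real^'d^'d) S. finite S \<and> card S \<le> 2 * r \<and> (\<forall>i. B $ i \<in> span S)
            \<and> (\<forall>i j. psgn (B $ i $ j) = f (max (x i) (y j)))"
    proof (cases "Z = {}")
      case True
      define B :: "real^'d^'d" where "B = (\<chi> i j. f (max (x i) (y j)))"
      have rc: "finite (range (Rw f y)) \<and> card (range (Rw f y)) \<le> 2*0+1"
        using rows_count[of Z 0 f y] True zc by simp
      have "\<forall>i. B $ i \<in> span (range (Rw f y))"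
        by (intro allI span_base) (auto simp: B_def Rw_def)
      moreover have "\<forall>i j. psgn (B $ i $ j) = f (max (x i) (y j))" by (simp add: B_def pp)
      ultimately show ?thesis using rc r1
        by (intro exI[of _ B] exI[of _ "range (Rw f y)"]) auto
    next
      case False
      obtain m c where mZ: "m \<in> Z" and mmax: "\<forall>z\<in>Z. z \<le> m" and c1: "c < m"
        and c2: "\<forall>t. c \<le> t \<and> t < m \<longrightarrow> t \<notin> Z"
        using split_point2[OF fin False] by blast
      let ?m = m
      have fm: "f ?m = -1" using fZ mZ .
      note sf = split_facts[OF mZ mmax zc c1 c2]
      define f' where "f' = (\<lambda>t. f (min t c))"
      have "card (Z - {?m}) = card Z - 1" by (rule card_Diff_singleton[OF mZ])
      moreover have "card Z \<le> r" using cardZ Z_def by simp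
      ultimately have "card (Z - {?m}) \<le> r - 1" by linarith
      then have rc: "finite (range (Rw f' y)) \<and> card (range (Rw f' y)) \<le> 2*(r-1)+1"
        using rows_count[of "Z - {?m}" "r-1" f' y] fin sf(1) unfolding f'_def by auto
      have cnt: "2*(r-1)+1 + 1 \<le> 2 * r" using r1 by simp
      have low: "\<And>a b. a < ?m \<Longrightarrow> b < ?m \<Longrightarrow> f (max a b) = f' (max a b)"
        using sf(2) unfolding f'_def by (simp add: max_def)
      have high: "\<And>t. t \<ge> c \<Longrightarrow> f' t = f c" unfolding f'_def by (simp add: min_def)
      have above: "\<And>t. t > ?m \<Longrightarrow> f t = f (?m + 1)" using sf(3) by blast
      consider "f (?m+1) = -1" | "f (?m+1) = 1" using fv by blast
      then show ?thesis
      proof cases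
        case 1
        define B :: "real^'d^'d" where
          "B = (\<chi> i j. if x i < ?m \<and> y j < ?m then f (max (x i) (y j)) else -1)"
        define w :: "real^'d" where "w = (\<chi> j. if y j \<ge> ?m then -1 - f c else 0)"
        define S where "S = (\<lambda>u. u + w) ` range (Rw f' y) \<union> {(\<chi> j. -1)}"
        have finS: "finite S" using rc S_def by auto
        have cS: "card S \<le> 2 * r"
        proof -
          have "card S \<le> card ((\<lambda>u. u + w) ` range (Rw f' y)) + card {(\<chi> j. -1)::real^'d}"
            unfolding S_def by (rule card_Un_le)
          also have "\<dots> \<le> card (range (Rw f' y)) + 1" using card_image_le rc by auto
          finally show ?thesis using rc cnt by linarith
        qed
        have rows: "\<forall>i. B $ i \<in> S"
        proof
          fix i
          show "B $ i \<in> S"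
          proof (cases "x i < ?m")
            case True
            have "B $ i = Rw f' y (x i) + w"
            proof (subst vec_eq_iff, intro allI)
              fix j
              show "B $ i $ j = (Rw f' y (x i) + w) $ j"
              proof (cases "y j < ?m")
                case True
                then show ?thesis using low[OF \<open>x i < ?m\<close> True] \<open>x i < ?m\<close>
                  by (simp add: B_def Rw_def w_def)
              next
                case False
                then show ?thesis using high[of "max (x i) (y j)"] c1 \<open>x i < ?m\<close>
                  by (simp add: B_def Rw_def w_def)
              qed
            qed
            then show ?thesis unfolding S_def by auto
          next
            case False
            then have "B $ i = (\<chi> j. -1)" by (simp add: B_def vec_eq_iff)
            then show ?thesis unfolding S_def by auto
          qed
        qed
        have signs: "\<forall>i j. psgn (B $ i $ j) = f (max (x i) (y j))"
        proof (intro allI)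
          fix i j
          show "psgn (B $ i $ j) = f (max (x i) (y j))"
          proof (cases "x i < ?m \<and> y j < ?m")
            case True then show ?thesis by (simp add: B_def pp)
          next
            case False
            then have "max (x i) (y j) = ?m \<or> max (x i) (y j) > ?m" by linarith
            then have "f (max (x i) (y j)) = -1" using fm above[of "max (x i) (y j)"] 1 by auto
            then show ?thesis using False by (simp add: B_def psgn_def)
          qed
        qed
        show ?thesis using finS cS rows signs span_base
          by (intro exI[of _ B] exI[of _ S]) blast
      next
        case 2
        define B :: "real^'d^'d" where
          "B = (\<chi> i j. if x i < ?m then (if y j < ?m then f (max (x i) (y j)) else if y j = ?m then -1 else 2)
                 else if x i = ?m then (if y j \<le> ?m then -2 else 1)
                 else (if y j < ?m then f c + 2 else 1))"
        define w :: "real^'d" where "w = (\<chi> j. if y j = ?m then -1 - f c else if y j > ?m then 2 - f c else 0)"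
        define zr :: "real^'d" where "zr = (\<chi> j. if y j \<le> ?m then -2 else 1)"
        define S where "S = (\<lambda>u. u + w) ` range (Rw f' y) \<union> {zr}"
        have finS: "finite S" using rc S_def by auto
        have cS: "card S \<le> 2 * r"
        proof -
          have "card S \<le> card ((\<lambda>u. u + w) ` range (Rw f' y)) + card {zr}"
            unfolding S_def by (rule card_Un_le)
          also have "\<dots> \<le> card (range (Rw f' y)) + 1" using card_image_le rc by auto
          finally show ?thesis using rc cnt by linarith
        qed
        have rowlow: "\<And>a. a < ?m \<Longrightarrow> (\<chi> j. if y j < ?m then f (max a (y j)) else if y j = ?m then -1 else 2) = Rw f' y a + w"
        proof -
          fix a assume a: "a < ?m"
          show "(\<chi> j. if y j < ?m then f (max a (y j)) else if y j = ?m then -1 else 2) = Rw f' y a + w"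
          proof (subst vec_eq_iff, intro allI)
            fix j
            show "(\<chi> j. if y j < ?m then f (max a (y j)) else if y j = ?m then -1 else 2) $ j = (Rw f' y a + w) $ j"
            proof (cases "y j < ?m")
              case True
              then show ?thesis using low[OF a True] by (simp add: Rw_def w_def)
            next
              case False
              then show ?thesis using high[of "max a (y j)"] c1 a
                by (simp add: Rw_def w_def)
            qed
          qed
        qed
        have rows: "\<forall>i. B $ i \<in> span S"
        proof
          fix i
          consider "x i < ?m" | "x i = ?m" | "x i > ?m" by linarith
          then show "B $ i \<in> span S"
          proof cases
            case 1
            then have "B $ i = Rw f' y (x i) + w" using rowlow[OF 1, symmetric]
              by (simp add: B_def)
            then show ?thesis unfolding S_def by (auto intro: span_base)
          next
            case 2
            then have "B $ i = zr" by (simp add: B_def zr_def)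
            then show ?thesis unfolding S_def by (auto intro: span_base)
          next
            case 3
            have "B $ i = (Rw f' y c + w) - zr"
            proof (subst vec_eq_iff, intro allI)
              fix j
              show "B $ i $ j = (Rw f' y c + w - zr) $ j"
                using 3 c1 high[of "max c (y j)"] by (simp add: B_def Rw_def w_def zr_def)
            qed
            moreover have "Rw f' y c + w \<in> span S" unfolding S_def by (auto intro: span_base)
            moreover have "zr \<in> span S" unfolding S_def by (auto intro: span_base)
            ultimately show ?thesis by (simp add: span_diff)
          qed
        qed
        have signs: "\<forall>i j. psgn (B $ i $ j) = f (max (x i) (y j))"
        proof (intro allI)
          fix i j
          have fc: "f c = 1 \<or> f c = -1" using fv by blast
          consider "x i < ?m" "y j < ?m" | "x i < ?m" "y j = ?m" | "x i < ?m" "y j > ?m"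
            | "x i = ?m" "y j \<le> ?m" | "x i = ?m" "y j > ?m" | "x i > ?m"
            by linarith
          then show "psgn (B $ i $ j) = f (max (x i) (y j))"
          proof cases
            case 1 then show ?thesis by (simp add: B_def pp)
          next
            case 2 then show ?thesis using fm by (simp add: B_def psgn_def)
          next
            case 3 then show ?thesis using above[of "y j"] 2 by (simp add: B_def psgn_def)
          next
            case 4 then show ?thesis using fm by (simp add: B_def psgn_def max_def)
          next
            case 5 then show ?thesis using above[of "y j"] 2 by (simp add: B_def psgn_def)
          next
            case 6
            then have "f (max (x i) (y j)) = 1" using above[of "max (x i) (y j)"] 2 by simp
            then show ?thesis using 6 fc by (auto simp add: B_def psgn_def)
          qed
        qed
        show ?thesis using finS cS rows signs
          by (intro exI[of _ B] exI[of _ S]) blast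
      qed
    qed
    then obtain B :: "real^'d^'d" and S where B: "finite S" "card S \<le> 2 * r" "\<forall>i. B $ i \<in> span S"
      "\<forall>i j. psgn (B $ i $ j) = f (max (x i) (y j))" by blast
    have "srank A \<le> rank B" using srank_le[of B A] B(4) pA by simp
    also have "\<dots> \<le> card S" using rank_le_span[of S B] B by blast
    finally show ?thesis using B(2) by linarith
  qed
  then show ?thesis unfolding A_def .
qed


theorem proposition3:
  fixes g :: "real \<Rightarrow> real" and r :: nat
    and x y :: "'d::finite \<Rightarrow> real"
  assumes "continuous_on UNIV g"
    and "r \<ge> 1"
    and "finite {z. g z = 0}" and "card {z. g z = 0} \<le> r"
    and "\<forall>i. x i \<in> {0..1}" and "\<forall>j. y j \<in> {0..1}"
  shows "srank ((\<chi> i j. g (max (x i) (y j))) :: real^'d^'d) \<le> 2 * r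
       \<and> srank ((\<chi> i j. g (min (x i) (y j))) :: real^'d^'d) \<le> 2 * r"
proof
  show "srank ((\<chi> i j. g (max (x i) (y j))) :: real^'d^'d) \<le> 2 * r"
    using main_max[OF assms(1-4)] .
  define h where "h = (\<lambda>t. g (- t))"
  have ch: "continuous_on UNIV h" unfolding h_def
    by (intro continuous_on_compose2[OF assms(1)] continuous_intros) auto
  have zh: "{z. h z = 0} = uminus ` {z. g z = 0}"
  proof (intro set_eqI iffI)
    fix z assume "z \<in> {z. h z = 0}"
    then have "- z \<in> {z. g z = 0}" by (simp add: h_def)
    then show "z \<in> uminus ` {z. g z = 0}" by (rule rev_image_eqI) simp
  next
    fix z assume "z \<in> uminus ` {z. g z = 0}"
    then show "z \<in> {z. h z = 0}" by (auto simp: h_def)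
  qed
  have fh: "finite {z. h z = 0}" using zh assms(3) by simp
  have "card {z. h z = 0} = card {z. g z = 0}" using zh by (simp add: card_image)
  then have kh: "card {z. h z = 0} \<le> r" using assms(4) by simp
  have "(\<chi> i j. g (min (x i) (y j))) = ((\<chi> i j. h (max (- x i) (- y j))) :: real^'d^'d)"
  proof -
    have mm: "\<And>a b::real. min a b = - max (- a) (- b)" by linarith
    show ?thesis by (simp add: vec_eq_iff h_def mm)
  qed
  then show "srank ((\<chi> i j. g (min (x i) (y j))) :: real^'d^'d) \<le> 2 * r"
    using main_max[OF ch assms(2) fh kh, of "\<lambda>i. - x i" "\<lambda>j. - y j"] by simp
qed

end
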